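(* Let $f$ be a stable update function. For every $\delta>0$ there exists $0<c_0<1$ such that the following holds: if $\vec u_i,\vec u_j\in\mathbb S^{d-1}$ have effective angle $\gamma=\gamma(\vec u_i,\vec u_j)\le\frac{\pi}{2}-\delta$, and $\vec u_i'=\vec w/\|\vec w\|$ with $\vec w=\vec u_i+f(\langle\vec u_i,\vec u_j\rangle)\vec u_j$, then the new effective angle $\gamma'=\gamma(\vec u_i',\vec u_j)$ satisfies $\gamma'\le c_0\gamma$.
   Context: $f:[-1,1]\to\mathbb R$ is stable if continuous and $\operatorname{sign}f(A)=\operatorname{sign}A$ for all $A\in[-1,1]$. The angle is $\alpha(\vec u,\vec v)=\arccos\langle\vec u,\vec v\rangle\in[0,\pi]$ and the effective angle is $\gamma(\vec u,\vec v)=\min(\alpha(\vec u,\vec v),\pi-\alpha(\vec u,\vec v))$. *)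

theory Defs
  imports "HOL-Analysis.Analysis"
begin

definition stable :: "(real \<Rightarrow> real) \<Rightarrow> bool" where
  "stable f \<longleftrightarrow> continuous_on {-1..1} f \<and> (\<forall>A\<in>{-1..1}. sgn (f A) = sgn A)"

definition vangle :: "'a::real_inner \<Rightarrow> 'a \<Rightarrow> real" where
  "vangle u v = arccos (inner u v)"

definition eff_angle :: "'a::real_inner \<Rightarrow> 'a \<Rightarrow> real" where
  "eff_angle u v = min (vangle u v) (pi - vangle u v)"

end

theory Submission
  imports Defs
begin

lemma sin_scale:
  fixes K x :: real
  assumes K: "1 \<le> K" and x: "0 \<le> x" "x \<le> pi"
  shows "sin x \<le> K * sin (x / K)"
proof -
  let ?g = "\<lambda>x. K * sin (x / K) - sin x"
  have d: "\<And>t. (?g has_real_derivative (cos (t / K) - cos t)) (at t)"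
  proof -
    fix t
    have "(?g has_real_derivative (K * (cos (t / K) * (1 / K)) - cos t)) (at t)"
      by (auto intro!: derivative_eq_intros)
    moreover have "K * (cos (t / K) * (1 / K)) - cos t = cos (t / K) - cos t"
      using K by simp
    ultimately show "(?g has_real_derivative (cos (t / K) - cos t)) (at t)" by simp
  qed
  have "?g 0 \<le> ?g x"
  proof (rule DERIV_nonneg_imp_nondecreasing[OF x(1)])
    fix t assume t: "0 \<le> t" "t \<le> x"
    have "t \<le> t * K" using K t mult_left_mono[of 1 K t] by simp
    hence "t / K \<le> t" using K by (simp add: divide_le_eq)
    moreover have "0 \<le> t / K" using K t by simp
    ultimately have "cos t \<le> cos (t / K)"
      using t x by (intro cos_monotone_0_pi_le) auto
    then show "\<exists>y. (?g has_real_derivative y) (at t) \<and> 0 \<le> y"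
      using d[of t] by (intro exI[of _ "cos (t / K) - cos t"]) simp
  qed
  then show ?thesis by simp
qed

lemma eff_angle_abs:
  fixes u v :: "'a::real_inner"
  assumes "\<bar>inner u v\<bar> \<le> 1"
  shows "eff_angle u v = arccos \<bar>inner u v\<bar>"
proof -
  let ?A = "inner u v"
  have m: "arccos (- ?A) = pi - arccos ?A" using arccos_minus_abs assms by blast
  show ?thesis
  proof (cases "?A \<ge> 0")
    case True
    have "arccos ?A \<le> arccos (- ?A)" using True assms by (subst arccos_le_mono) auto
    then show ?thesis using True m by (simp add: eff_angle_def vangle_def min_def)
  next
    case False
    have "arccos (- ?A) \<le> arccos ?A" using False assms by (subst arccos_le_mono) auto
    then show ?thesis using False m by (simp add: eff_angle_def vangle_def min_def)
  qed
qed

lemma unit_inner_le: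
  fixes u v :: "'a::real_inner"
  assumes "norm u = 1" "norm v = 1"
  shows "\<bar>inner u v\<bar> \<le> 1"
  using Cauchy_Schwarz_ineq2[of u v] assms by simp

lemma step:
  fixes ui uj :: "'a::real_inner" and b K :: real
  assumes ui: "norm ui = 1" and uj: "norm uj = 1"
    and sg: "inner ui uj * b \<ge> 0" and K: "1 \<le> K" and Kb: "K\<^sup>2 \<le> 1 + b\<^sup>2"
  shows "eff_angle ((ui + b *\<^sub>R uj) /\<^sub>R norm (ui + b *\<^sub>R uj)) uj
         \<le> eff_angle ui uj / K"
proof -
  define A where "A = inner ui uj"
  define w where "w = ui + b *\<^sub>R uj"
  define v where "v = w /\<^sub>R norm w"
  have A1: "\<bar>A\<bar> \<le> 1" unfolding A_def using unit_inner_le[OF ui uj] .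
  have nw2: "(norm w)\<^sup>2 = 1 + 2 * A * b + b\<^sup>2"
  proof -
    have "(norm w)\<^sup>2 = inner w w" by (simp add: power2_norm_eq_inner)
    also have "\<dots> = inner ui ui + 2 * b * inner ui uj + b * b * inner uj uj"
      unfolding w_def by (simp add: inner_add_left inner_add_right inner_commute algebra_simps)
    also have "inner ui ui = 1" using ui by (simp add: power2_norm_eq_inner[symmetric])
    also have "inner uj uj = 1" using uj by (simp add: power2_norm_eq_inner[symmetric])
    finally show ?thesis unfolding A_def by (simp add: power2_eq_square algebra_simps)
  qed
  have "K\<^sup>2 \<le> (norm w)\<^sup>2" using nw2 Kb sg A_def by simp
  hence Kw: "K \<le> norm w" by (rule power2_le_imp_le) simp
  hence wpos: "norm w > 0" using K by linarith
  have nv: "norm v = 1" unfolding v_def using wpos by simp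
  have Av: "inner v uj = (A + b) / norm w"
    unfolding v_def w_def A_def using uj
    by (simp add: inner_add_left power2_norm_eq_inner[symmetric] divide_simps)
  have absAb: "\<bar>A + b\<bar> = \<bar>A\<bar> + \<bar>b\<bar>" using sg A_def
    by (cases "A \<ge> 0"; cases "b \<ge> 0") (auto simp: zero_le_mult_iff)
  have Av1: "\<bar>inner v uj\<bar> \<le> 1" using unit_inner_le[OF nv uj] .
  define a where "a = \<bar>A\<bar>"
  define a' where "a' = \<bar>inner v uj\<bar>"
  have a'eq: "a' = (a + \<bar>b\<bar>) / norm w" unfolding a'_def a_def using Av absAb wpos by simp
  have sq: "1 - a'\<^sup>2 = (1 - a\<^sup>2) / (norm w)\<^sup>2"
  proof -
    have "a\<^sup>2 = A\<^sup>2" "\<bar>b\<bar>\<^sup>2 = b\<^sup>2" "a * \<bar>b\<bar> = A * b" unfolding a_def using sg A_def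
      by (auto simp: abs_mult[symmetric])
    then have num: "(a + \<bar>b\<bar>)\<^sup>2 = A\<^sup>2 + 2 * A * b + b\<^sup>2"
      by (simp add: power2_sum)
    have "a'\<^sup>2 = (a + \<bar>b\<bar>)\<^sup>2 / (norm w)\<^sup>2" using a'eq by (simp add: power_divide)
    hence "1 - a'\<^sup>2 = ((norm w)\<^sup>2 - (a + \<bar>b\<bar>)\<^sup>2) / (norm w)\<^sup>2"
      using wpos by (simp add: diff_divide_distrib)
    also have "(norm w)\<^sup>2 - (a + \<bar>b\<bar>)\<^sup>2 = 1 - a\<^sup>2" using num nw2 \<open>a\<^sup>2 = A\<^sup>2\<close> by simp
    finally show ?thesis .
  qed
  have e1: "eff_angle ui uj = arccos a" unfolding a_def A_def
    using eff_angle_abs[OF unit_inner_le[OF ui uj]] .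
  have e2: "eff_angle v uj = arccos a'" unfolding a'_def
    using eff_angle_abs[OF Av1] .
  have a01: "0 \<le> a" "a \<le> 1" using A1 a_def by auto
  have a'01: "0 \<le> a'" "a' \<le> 1" using Av1 a'_def by auto
  define g where "g = arccos a"
  define g' where "g' = arccos a'"
  have g: "0 \<le> g" "g \<le> pi/2" unfolding g_def using a01 arccos_lbound arccos_le_pi2 by auto
  have g': "0 \<le> g'" "g' \<le> pi/2" unfolding g'_def using a'01 arccos_lbound arccos_le_pi2 by auto
  have sg': "sin g' = sin g / norm w"
    unfolding g_def g'_def using a01 a'01 sq wpos
    by (simp add: sin_arccos real_sqrt_divide)
  have "sin g / norm w \<le> sin g / K"
    using Kw K g sin_ge_zero[of g] wpos by (intro divide_left_mono) auto
  also have "sin g / K \<le> sin (g / K)"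
  proof -
    have "sin g \<le> K * sin (g / K)" using sin_scale[OF K, of g] g by simp
    thus ?thesis using K by (simp add: divide_le_eq mult.commute)
  qed
  finally have "sin g' \<le> sin (g / K)" using sg' by simp
  moreover have "0 \<le> g / K" using g K by simp
  moreover have "g / K \<le> g" using g K mult_left_mono[of 1 K g] by (simp add: divide_le_eq)
  ultimately have "g' \<le> g / K" using g' g sin_mono_le_eq[of g' "g / K"] by linarith
  then show ?thesis using e1 e2 g_def g'_def v_def w_def by simp
qed

theorem mainTheorem19:
  fixes f :: "real \<Rightarrow> real" and \<delta> :: real
  assumes "stable f" and "\<delta> > 0"
  shows "\<exists>c0. 0 < c0 \<and> c0 < 1 \<and>
    (\<forall>(ui::'a::euclidean_space) uj. norm ui = 1 \<longrightarrow> norm uj = 1 \<longrightarrow>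
       eff_angle ui uj \<le> pi / 2 - \<delta> \<longrightarrow>
       (let w = ui + f (inner ui uj) *\<^sub>R uj in
        eff_angle (w /\<^sub>R norm w) uj \<le> c0 * eff_angle ui uj))"
proof -
  have cont: "continuous_on {-1..1} f" and sgn: "\<And>A. A \<in> {-1..1} \<Longrightarrow> sgn (f A) = sgn A"
    using assms(1) unfolding stable_def by auto
  define d where "d = min \<delta> (pi/2)"
  have d: "0 < d" "d \<le> pi/2" "d \<le> \<delta>" using assms(2) pi_gt_zero unfolding d_def by auto
  define e where "e = sin d"
  have e: "0 < e" "e \<le> 1" unfolding e_def using d
    by (auto intro!: sin_gt_zero)
  define S where "S = {-1..-e} \<union> {e..(1::real)}"
  have Ssub: "S \<subseteq> {-1..1}" unfolding S_def using e by auto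
  have cS: "compact S" unfolding S_def by (rule compact_Un[OF compact_Icc compact_Icc])
  have nS: "S \<noteq> {}" unfolding S_def using e by auto
  have coS: "continuous_on S (\<lambda>x. \<bar>f x\<bar>)"
    using continuous_on_rabs[OF continuous_on_subset[OF cont Ssub]] .
  obtain x0 where x0: "x0 \<in> S" "\<And>y. y \<in> S \<Longrightarrow> \<bar>f x0\<bar> \<le> \<bar>f y\<bar>"
    using continuous_attains_inf[OF cS nS coS] by auto
  define m where "m = \<bar>f x0\<bar>"
  have "x0 \<noteq> 0" using x0(1) e unfolding S_def by auto
  moreover have "x0 \<in> {-1..1}" using x0(1) Ssub by blast
  ultimately have "sgn (f x0) \<noteq> 0" using sgn[of x0] by (simp add: sgn_0_0)
  hence mpos: "m > 0" unfolding m_def by (simp add: sgn_0_0)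
  define K where "K = sqrt (1 + m\<^sup>2)"
  have K1: "K > 1" unfolding K_def using mpos by (simp add: real_less_rsqrt)
  have KK: "K\<^sup>2 = 1 + m\<^sup>2" unfolding K_def by simp
  show ?thesis
  proof (intro exI[of _ "1/K"] conjI allI impI)
    show "0 < 1/K" "1/K < 1" using K1 by auto
  next
    fix ui uj :: 'a
    assume ui: "norm ui = 1" and uj: "norm uj = 1" and h: "eff_angle ui uj \<le> pi / 2 - \<delta>"
    define A where "A = inner ui uj"
    have A1: "\<bar>A\<bar> \<le> 1" unfolding A_def using unit_inner_le[OF ui uj] .
    have ea: "eff_angle ui uj = arccos \<bar>A\<bar>"
      unfolding A_def using eff_angle_abs[OF unit_inner_le[OF ui uj]] .
    have ge: "arccos \<bar>A\<bar> \<le> pi/2 - d" using h ea d by simp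
    have "cos (pi/2 - d) \<le> cos (arccos \<bar>A\<bar>)"
      using ge d A1 by (intro cos_monotone_0_pi_le) (auto intro: arccos_lbound)
    hence Ae: "e \<le> \<bar>A\<bar>" unfolding e_def using A1 by (simp add: cos_diff)
    have AS: "A \<in> S" unfolding S_def using Ae A1 by auto
    have fm: "m \<le> \<bar>f A\<bar>" unfolding m_def using x0(2)[OF AS] .
    have "sgn (f A) = sgn A" using sgn AS Ssub by auto
    hence sgA: "A * f A \<ge> 0"
      by (auto simp: sgn_if zero_le_mult_iff split: if_splits)
    have "m\<^sup>2 \<le> \<bar>f A\<bar>\<^sup>2" using fm mpos by (intro power_mono) auto
    hence "m\<^sup>2 \<le> (f A)\<^sup>2" by simp
    hence Kb: "K\<^sup>2 \<le> 1 + (f A)\<^sup>2" using KK by simp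
    have "eff_angle ((ui + f A *\<^sub>R uj) /\<^sub>R norm (ui + f A *\<^sub>R uj)) uj \<le> eff_angle ui uj / K"
      using step[OF ui uj _ _ Kb] sgA K1 A_def by simp
    then show "let w = ui + f (inner ui uj) *\<^sub>R uj in
        eff_angle (w /\<^sub>R norm w) uj \<le> 1 / K * eff_angle ui uj"
      unfolding A_def Let_def by simp
  qed
qed

end
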